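(* Fix $\kappa_r>0$. For $\lambda_r\in\mathbb{R}$, let $\gamma_r$ be a random variable on $(0,\infty)$ with density proportional to $\gamma^{-1/2}\exp\!\left(-\frac{\lambda_r^2+\kappa_r\gamma^2}{2\gamma}\right)$, and let $\kappa'_r$ be a random variable on $(0,\infty)$ with density proportional to $\kappa\exp\!\left(-\frac{\mathbb{E}[\gamma_r]\,\kappa}{2}\right)$ (a Gamma distribution with shape $2$ and rate $\mathbb{E}[\gamma_r]/2$). Then there exists a decreasing function $\rho:[0,\infty)\to(0,\infty)$, depending only on $\kappa_r$, such that $\mathbb{E}[\kappa'_r] = \rho(|\lambda_r|)$ for every $\lambda_r\in\mathbb{R}$.
   Context: In the paper's Gibbs sampler, $\kappa_r$ is resampled from $\mathrm{Gamma}(\text{shape }2,\text{ rate }\gamma_r/2)$, and the theorem concerns this update with $\gamma_r$ replaced by its conditional expectation given $\lambda_r$ and the current value of $\kappa_r$. *)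

theory Defs
  imports "HOL-Analysis.Analysis"
begin

definition gig_dens :: "real \<Rightarrow> real \<Rightarrow> real \<Rightarrow> real" where
  "gig_dens kap lam g = g powr (-1/2) * exp (- (lam^2 + kap * g^2) / (2 * g))"

definition mean_gamma :: "real \<Rightarrow> real \<Rightarrow> real" where
  "mean_gamma kap lam =
     (LINT g:{0<..}|lborel. g * gig_dens kap lam g) / (LINT g:{0<..}|lborel. gig_dens kap lam g)"

definition kappa_dens :: "real \<Rightarrow> real \<Rightarrow> real" where
  "kappa_dens b k = k * exp (- (b * k) / 2)"

definition mean_kappa_new :: "real \<Rightarrow> real \<Rightarrow> real" where
  "mean_kappa_new kap lam =
     (LINT k:{0<..}|lborel. k * kappa_dens (mean_gamma kap lam) k)
       / (LINT k:{0<..}|lborel. kappa_dens (mean_gamma kap lam) k)"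

end

theory Submission
  imports Defs "HOL-Probability.Probability"
begin

lemma bound_int:
  fixes a r :: real assumes a: "a > 0" and r: "r > -1"
  shows "set_integrable lborel {0<..} (\<lambda>g. g powr r * exp (-(a*g)))"
proof -
  have "(\<lambda>t. complex_of_real t powr (complex_of_real (r+1) - 1) / of_real (exp (a * t)))
             absolutely_integrable_on {0<..}"
    by (rule absolutely_integrable_Gamma_integral) (use a r in auto)
  from absolutely_integrable_norm[OF this]
  have "set_integrable lebesgue {0<..} (\<lambda>t. norm (complex_of_real t powr (complex_of_real (r+1) - 1) / of_real (exp (a * t))))"
    by (simp add: o_def)
  also have "?this \<longleftrightarrow> set_integrable lebesgue {0<..} (\<lambda>g. g powr r * exp (-(a*g)))"
  proof (rule set_integrable_cong)
    fix x :: real assume x: "x \<in> {0<..}"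
    have "complex_of_real (r+1) - 1 = complex_of_real r" by simp
    then show "norm (complex_of_real x powr (complex_of_real (r+1) - 1) / of_real (exp (a * x))) = x powr r * exp (-(a*x))"
      using x by (simp add: powr_of_real norm_mult norm_inverse exp_minus divide_inverse)
  qed auto
  finally have L: "set_integrable lebesgue {0<..} (\<lambda>g. g powr r * exp (-(a*g)))" .
  show ?thesis unfolding set_integrable_def
    using L unfolding set_integrable_def
    by (subst (asm) integrable_completion) measurable
qed

lemma exp_moment:
  fixes l :: real assumes l: "l > 0" and i: "i > 0"
  shows "(LINT k:{0<..}|lborel. k^i * exp (-(l*k))) = fact i / l^(Suc i)"
proof -
  have eq: "(\<lambda>k. indicator {0<..} k *\<^sub>R (k^i * exp (-(l*k)))) = (\<lambda>k. erlang_density 0 l k * k^i * (1/l))"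
    using l i by (auto simp: fun_eq_iff erlang_density_def split: split_indicator)
  have "(\<integral>\<^sup>+k. ennreal (erlang_density 0 l k * k^i * (1/l)) \<partial>lborel)
      = (\<integral>\<^sup>+k. ennreal (erlang_density 0 l k * k^i) * ennreal (1/l) \<partial>lborel)"
    using l by (intro nn_integral_cong) (subst ennreal_mult''[symmetric], simp_all)
  also have "\<dots> = (\<integral>\<^sup>+k. ennreal (erlang_density 0 l k * k^i) \<partial>lborel) * ennreal (1/l)"
    by (rule nn_integral_multc) measurable
  also have "\<dots> = ennreal (fact i / l^(Suc i))"
    using l by (simp add: nn_integral_erlang_ith_moment ennreal_mult''[symmetric] divide_ennreal)
  finally have nn: "(\<integral>\<^sup>+k. ennreal (erlang_density 0 l k * k^i * (1/l)) \<partial>lborel) = ennreal (fact i / l^(Suc i))" .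
  have "has_bochner_integral lborel (\<lambda>k. erlang_density 0 l k * k^i * (1/l)) (fact i / l^(Suc i))"
    by (rule has_bochner_integral_nn_integral[OF _ _ _ nn]) (use l in \<open>auto simp: erlang_density_def\<close>)
  then have "integral\<^sup>L lborel (\<lambda>k. erlang_density 0 l k * k^i * (1/l)) = fact i / l^(Suc i)"
    by (rule has_bochner_integral_integral_eq)
  then show ?thesis unfolding set_lebesgue_integral_def eq .
qed

lemma gig_split:
  assumes "g > 0"
  shows "gig_dens a lam g = exp (-(lam^2/(2*g))) * (g powr (-1/2) * exp (-((a/2)*g)))"
proof -
  have eq: "- (lam^2 + a * g^2) / (2 * g) = -(lam^2/(2*g)) + -((a/2)*g)"
    using assms by (simp add: field_simps power2_eq_square)
  show ?thesis unfolding gig_dens_def eq exp_add by (simp only: mult_ac)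
qed

lemma gig_pos: "g > 0 \<Longrightarrow> gig_dens a lam g > 0"
  unfolding gig_dens_def by simp

lemma gig_shift:
  assumes "g > 0"
  shows "gig_dens a mu g = exp (-((mu^2 - lam^2)/(2*g))) * gig_dens a lam g"
proof -
  have "exp (-(mu^2/(2*g))) = exp (-((mu^2 - lam^2)/(2*g))) * exp (-(lam^2/(2*g)))"
    by (simp add: exp_add[symmetric] diff_divide_distrib)
  then show ?thesis using gig_split[OF assms, of a mu] gig_split[OF assms, of a lam] by simp
qed

lemma gig_int:
  fixes a lam :: real
  assumes a: "a > 0"
  shows "set_integrable lborel {0<..} (gig_dens a lam)"
        "set_integrable lborel {0<..} (\<lambda>g. g * gig_dens a lam g)"
proof -
  have m1: "set_borel_measurable lborel {0<..} (gig_dens a lam)"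
    unfolding set_borel_measurable_def gig_dens_def by measurable
  have m2: "set_borel_measurable lborel {0<..} (\<lambda>g. g * gig_dens a lam g)"
    unfolding set_borel_measurable_def gig_dens_def by measurable
  have e1: "exp (-(lam^2/(2*g))) \<le> 1" if "g > 0" for g
    using that by simp
  have a2: "a/2 > 0" using a by simp
  show "set_integrable lborel {0<..} (gig_dens a lam)"
  proof (rule set_integrable_bound[OF bound_int[OF a2, of "-1/2"] m1])
    show "AE x\<in>{0<..} in lborel. norm (gig_dens a lam x) \<le> norm (x powr (-1/2) * exp (-((a/2)*x)))"
    proof (intro AE_I2 impI)
      fix x :: real assume x: "x \<in> {0<..}"
      then have "x > 0" by simp
      show "norm (gig_dens a lam x) \<le> norm (x powr (-1/2) * exp (-((a/2)*x)))"
        using gig_split[OF \<open>x > 0\<close>, of a lam] e1[OF \<open>x > 0\<close>] \<open>x > 0\<close>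
        by (simp add: mult_left_le_one_le)
    qed
  qed simp
  show "set_integrable lborel {0<..} (\<lambda>g. g * gig_dens a lam g)"
  proof (rule set_integrable_bound[OF bound_int[OF a2, of "1/2"] m2])
    show "AE x\<in>{0<..} in lborel. norm (x * gig_dens a lam x) \<le> norm (x powr (1/2) * exp (-((a/2)*x)))"
    proof (intro AE_I2 impI)
      fix x :: real assume x: "x \<in> {0<..}"
      then have xp: "x > 0" by simp
      have "x powr (1/2) = x powr (1 + (-1/2))" by simp
      also have "\<dots> = x powr 1 * x powr (-1/2)" by (rule powr_add)
      also have "\<dots> = x * x powr (-1/2)" using xp by simp
      finally have pw: "x * x powr (-1/2) = x powr (1/2)" by simp
      have "x * gig_dens a lam x = exp (-(lam^2/(2*g))) * (x powr (1/2) * exp (-((a/2)*x)))" if "g = x" for g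
        using gig_split[OF xp, of a lam] pw that by (simp add: mult_ac)
      then show "norm (x * gig_dens a lam x) \<le> norm (x powr (1/2) * exp (-((a/2)*x)))"
        using e1[OF xp] xp
        by (simp add: mult_left_le_one_le)
    qed
  qed simp
qed

lemma int_pos:
  fixes f :: "real \<Rightarrow> real"
  assumes int0: "set_integrable lborel {0<..} f" and pos: "\<And>x. x > 0 \<Longrightarrow> f x > 0"
  shows "(LINT x:{0<..}|lborel. f x) > 0"
proof -
  let ?h = "\<lambda>x. indicator {0<..} x *\<^sub>R f x"
  have int: "integrable lborel ?h" using int0 unfolding set_integrable_def .
  have nn: "AE x in lborel. 0 \<le> ?h x"
    using pos by (intro AE_I2) (auto split: split_indicator intro: less_imp_le)
  have ge: "integral\<^sup>L lborel ?h \<ge> 0" by (rule integral_nonneg_AE[OF nn])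
  have "integral\<^sup>L lborel ?h \<noteq> 0"
  proof
    assume "integral\<^sup>L lborel ?h = 0"
    then have "AE x in lborel. ?h x = 0" using integral_nonneg_eq_0_iff_AE[OF int nn] by simp
    then have "AE x in lborel. x \<le> (0::real)"
    proof eventually_elim
      case (elim x)
      show ?case
      proof (rule ccontr)
        assume "\<not> x \<le> 0"
        then have "x > 0" by simp
        with elim pos[of x] show False by simp
      qed
    qed
    then have "emeasure lborel ({0<..} :: real set) = 0"
      by (subst (asm) AE_iff_measurable[of "{0<..}"]) auto
    moreover have "emeasure lborel ({1..2} :: real set) \<le> emeasure lborel ({0<..} :: real set)"
      by (rule emeasure_mono) auto
    ultimately show False by (simp add: emeasure_lborel_Icc)
  qed
  then show ?thesis using ge unfolding set_lebesgue_integral_def by simp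
qed

lemma mean_gamma_pos:
  assumes a: "a > 0"
  shows "mean_gamma a lam > 0"
  unfolding mean_gamma_def
  by (intro divide_pos_pos int_pos gig_int[OF a]) (simp_all add: gig_pos)

lemma mean_gamma_mono:
  assumes a: "a > 0" and xy: "0 \<le> x" "x \<le> y"
  shows "mean_gamma a x \<le> mean_gamma a y"
proof -
  define Zs where "Zs = (LINT g:{0<..}|lborel. gig_dens a x g)"
  define Ms where "Ms = (LINT g:{0<..}|lborel. g * gig_dens a x g)"
  define Zt where "Zt = (LINT g:{0<..}|lborel. gig_dens a y g)"
  define Mt where "Mt = (LINT g:{0<..}|lborel. g * gig_dens a y g)"
  have Zs: "Zs > 0" unfolding Zs_def by (intro int_pos gig_int[OF a]) (simp add: gig_pos)
  have Zt: "Zt > 0" unfolding Zt_def by (intro int_pos gig_int[OF a]) (simp add: gig_pos)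
  have Ms: "Ms > 0" unfolding Ms_def by (intro int_pos gig_int[OF a]) (simp add: gig_pos)
  define m where "m = Ms / Zs"
  have mpos: "m > 0" unfolding m_def using Zs Ms by simp
  define c where "c = (y^2 - x^2)/2"
  have "x^2 \<le> y^2" using xy by (intro power_mono) auto
  then have c: "c \<ge> 0" unfolding c_def by simp
  define h where "h = (\<lambda>g::real. exp (-(c/g)))"
  have shift: "gig_dens a y g = h g * gig_dens a x g" if "g > 0" for g
  proof -
    have "(y^2 - x^2)/(2*g) = c/g" unfolding c_def by simp
    then show ?thesis using gig_shift[OF that, of a y x] unfolding h_def by simp
  qed
  have hmono: "(g - m) * (h g - h m) \<ge> 0" if g: "g > 0" for g
  proof (cases "g \<le> m")
    case True
    have "c/m \<le> c/g" using True g c by (intro divide_left_mono) auto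
    then have "h g \<le> h m" unfolding h_def by simp
    then show ?thesis using True by (intro mult_nonpos_nonpos) auto
  next
    case False
    have "c/g \<le> c/m" using False mpos c by (intro divide_left_mono) auto
    then have "h m \<le> h g" unfolding h_def by simp
    then show ?thesis using False by (intro mult_nonneg_nonneg) auto
  qed
  have pw: "h m * (g * gig_dens a x g - m * gig_dens a x g) \<le> g * gig_dens a y g - m * gig_dens a y g"
    if "g \<in> {0<..}" for g
  proof -
    from that have g: "g > 0" by simp
    have "g * gig_dens a y g - m * gig_dens a y g - h m * (g * gig_dens a x g - m * gig_dens a x g)
        = ((g - m) * (h g - h m)) * gig_dens a x g"
      by (simp add: shift[OF g] algebra_simps)
    also have "\<dots> \<ge> 0" using hmono[OF g] gig_pos[OF g, of a x] by simp
    finally show ?thesis by simp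
  qed
  have ix1: "set_integrable lborel {0<..} (\<lambda>g. g * gig_dens a x g)" by (rule gig_int[OF a])
  have ix2: "set_integrable lborel {0<..} (\<lambda>g. m * gig_dens a x g)"
    by (rule set_integrable_mult_right) (rule gig_int[OF a])
  have iy1: "set_integrable lborel {0<..} (\<lambda>g. g * gig_dens a y g)" by (rule gig_int[OF a])
  have iy2: "set_integrable lborel {0<..} (\<lambda>g. m * gig_dens a y g)"
    by (rule set_integrable_mult_right) (rule gig_int[OF a])
  have "(LINT g:{0<..}|lborel. h m * (g * gig_dens a x g - m * gig_dens a x g))
      \<le> (LINT g:{0<..}|lborel. g * gig_dens a y g - m * gig_dens a y g)"
    by (rule set_integral_mono[OF set_integrable_mult_right[OF set_integral_diff(1)[OF ix1 ix2]]
          set_integral_diff(1)[OF iy1 iy2] pw])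
  also have "(LINT g:{0<..}|lborel. g * gig_dens a y g - m * gig_dens a y g) = Mt - m * Zt"
    unfolding Mt_def Zt_def by (simp add: set_integral_diff[OF iy1 iy2] set_integral_mult_right)
  also have "(LINT g:{0<..}|lborel. h m * (g * gig_dens a x g - m * gig_dens a x g)) = h m * (Ms - m * Zs)"
    unfolding Ms_def Zs_def by (simp add: set_integral_diff[OF ix1 ix2] set_integral_mult_right)
  also have "Ms - m * Zs = 0" unfolding m_def using Zs by simp
  finally have "m * Zt \<le> Mt" by simp
  then have "m \<le> Mt / Zt" using Zt by (simp add: pos_le_divide_eq)
  then show ?thesis unfolding mean_gamma_def m_def Ms_def Zs_def Mt_def Zt_def .
qed

lemma mean_kappa_eq:
  assumes a: "a > 0"
  shows "mean_kappa_new a lam = 4 / mean_gamma a lam"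
proof -
  define b where "b = mean_gamma a lam"
  have b: "b > 0" unfolding b_def by (rule mean_gamma_pos[OF a])
  then have b2: "b/2 > 0" by simp
  have f1: "(\<lambda>k. k * kappa_dens b k) = (\<lambda>k. k^2 * exp (-((b/2)*k)))"
    by (auto simp: fun_eq_iff kappa_dens_def power2_eq_square mult_ac)
  have f2: "kappa_dens b = (\<lambda>k. k^1 * exp (-((b/2)*k)))"
    by (auto simp: fun_eq_iff kappa_dens_def mult_ac)
  have "mean_kappa_new a lam = (fact 2 / (b/2)^3) / (fact 1 / (b/2)^2)"
  proof -
    have n: "(LINT k:{0<..}|lborel. k^2 * exp (-((b/2)*k))) = fact 2 / (b/2)^3"
      using exp_moment[OF b2, of 2] by (simp add: numeral_3_eq_3)
    have d: "(LINT k:{0<..}|lborel. k^1 * exp (-((b/2)*k))) = fact 1 / (b/2)^2"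
      using exp_moment[OF b2, of 1] by (simp add: numeral_2_eq_2)
    show ?thesis
      unfolding mean_kappa_new_def b_def[symmetric] f1 unfolding f2 n d ..
  qed
  also have "\<dots> = 4 / b" using b by (simp add: field_simps power_numeral_reduce)
  finally show ?thesis unfolding b_def .
qed

theorem theorem3:
  fixes kap :: real
  assumes "kap > 0"
  shows "\<exists>\<rho> :: real \<Rightarrow> real.
           (\<forall>x y. 0 \<le> x \<longrightarrow> x \<le> y \<longrightarrow> \<rho> y \<le> \<rho> x) \<and>
           (\<forall>x\<ge>0. \<rho> x > 0) \<and>
           (\<forall>lam :: real. mean_kappa_new kap lam = \<rho> \<bar>lam\<bar>)"
proof (intro exI[of _ "\<lambda>x. 4 / mean_gamma kap x"] conjI allI impI)
  fix x y :: real assume "0 \<le> x" "x \<le> y"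
  then show "4 / mean_gamma kap y \<le> 4 / mean_gamma kap x"
    using mean_gamma_mono[OF assms] mean_gamma_pos[OF assms]
    by (intro divide_left_mono) (auto intro: mult_pos_pos)
next
  fix x :: real
  show "4 / mean_gamma kap x > 0" using mean_gamma_pos[OF assms] by simp
next
  fix lam :: real
  have "gig_dens kap lam = gig_dens kap \<bar>lam\<bar>"
    by (simp add: fun_eq_iff gig_dens_def)
  then have "mean_gamma kap lam = mean_gamma kap \<bar>lam\<bar>"
    unfolding mean_gamma_def by simp
  then show "mean_kappa_new kap lam = 4 / mean_gamma kap \<bar>lam\<bar>"
    using mean_kappa_eq[OF assms] by simp
qed

end
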